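(* Let $\mathcal{X}$ be a finite set, $\mathcal{Y}=\{y_0,y_1\}$, and consider domains $s\in\{1,\dots,K,\star\}$, each with a joint distribution $P^s$ over $(U,X,Y)$ ($U$ unobserved), together with a coarsening $\tilde U=\psi(U)$ taking values in a finite set $\tilde{\mathcal{U}}$ of size $r$ (with a fixed ordering), and a fixed map $\phi:\mathcal{X}\to\mathbb{R}^d$. Assume: (i) (linear abduction with shared deduction) there are matrices $A_1,\dots,A_K,A_\star,D\in\mathbb{R}^{d\times r}$ such that for every $s\in\{1,\dots,K,\star\}$ and every $x\in\mathcal{X}$, $\big(P^s(\tilde U=\tilde u\mid X=x)\big)_{\tilde u\in\tilde{\mathcal{U}}}=\mathrm{softmax}(A_s^\top\phi(x))$ and $\big(P^s(Y=y_1\mid X=x,\tilde U=\tilde u)\big)_{\tilde u\in\tilde{\mathcal{U}}}=\mathrm{sigmoid}(D^\top\phi(x))$ (sigmoid applied entrywise), so in particular the deduction vector is the same in all domains; (ii) (transplant basis) $L\in\mathbb{R}^{d\times r}$ satisfies $A_s^\top L=I_r$ for all $s\in\{1,\dots,K,\star\}$ and $D^\top L=0$; set $T_{s\to s'}:=I_d+L(A_s^\top-A_{s'}^\top)$; (iii) (closure) for all $s,s'\in\{1,\dots,K,\star\}$ and all $w\in\mathbb{R}^d$: $P^s(\phi(X)=w)>0 \iff P^{s'}(\phi(X)=T_{s\to s'}w)>0$; (iv) (distributional match) fix any $A\in\mathbb{R}^{d\times r}$ with $A^\top L=I_r$ (for instance $A=A_s$ for some $s$), write $W:=\phi(X)$,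 $W_A:=LA^\top W$, $W_D:=(I_d-LA^\top)W$ and $\pi_A:=LA^\top$; for all $s,s'\in\{1,\dots,K,\star\}$ and every $w_D$, the law of $\pi_A T_{s\to s'}(w_D+W_A)$ when $W_A\sim P^s(W_A\mid W_D=w_D)$ equals $P^{s'}(W_A\mid W_D=w_D)$. Then the deduction component $W_D=(I_d-LA^\top)\phi(X)$ is an invariant representation: $P^s(Y\mid W_D)=P^{s'}(Y\mid W_D)$ for all $s,s'\in\{1,\dots,K,\star\}$.
   Context: softmax and sigmoid have their standard meanings; the $\tilde u$-th entry of $\mathrm{softmax}(A_s^\top\phi(x))$ is the modeled probability $P^s(\tilde u\mid x)$ and the $\tilde u$-th entry of $\mathrm{sigmoid}(D^\top\phi(x))$ is the modeled $P^s(y_1\mid x,\tilde u)$. $T_{s\to s'}$ is called the transplant operator from domain $s$ to domain $s'$. *)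

theory Defs
  imports "HOL-Probability.Probability"
begin

definition softmax :: "real ^ 'r \<Rightarrow> real ^ 'r" where
  "softmax z = (\<chi> i. exp (z $ i) / (\<Sum>j\<in>UNIV. exp (z $ j)))"

definition sigmoid :: "real ^ 'r \<Rightarrow> real ^ 'r" where
  "sigmoid z = (\<chi> i. 1 / (1 + exp (- (z $ i))))"

definition cprob :: "'a measure \<Rightarrow> 'a set \<Rightarrow> 'a set \<Rightarrow> real" where
  "cprob M A B = measure M (A \<inter> B) / measure M B"

definition transplant ::
  "real ^ 'r ^ 'd \<Rightarrow> real ^ 'r ^ 'd \<Rightarrow> real ^ 'r ^ 'd \<Rightarrow> real ^ 'd ^ 'd" where
  "transplant L As As' = mat 1 + L ** (transpose As - transpose As')"

end

theory Submission
  imports Defs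
begin

lemma split_meas:
  fixes M :: "'a measure" and g :: "'a \<Rightarrow> 'b"
  assumes fm: "finite_measure M" and fin: "finite T"
    and ms: "\<And>t. {\<omega>. R \<omega> \<and> g \<omega> = t} \<in> sets M"
  shows "measure M {\<omega>. R \<omega> \<and> g \<omega> \<in> T} = (\<Sum>t\<in>T. measure M {\<omega>. R \<omega> \<and> g \<omega> = t})"
proof -
  have "{\<omega>. R \<omega> \<and> g \<omega> \<in> T} = (\<Union>t\<in>T. {\<omega>. R \<omega> \<and> g \<omega> = t})" by auto
  moreover have "measure M (\<Union>t\<in>T. {\<omega>. R \<omega> \<and> g \<omega> = t}) = (\<Sum>t\<in>T. measure M {\<omega>. R \<omega> \<and> g \<omega> = t})"
    apply (rule measure_finite_Union[OF fin])
    using ms apply blast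
    apply (auto simp: disjoint_family_on_def)
    using fm finite_measure.emeasure_finite by blast
  ultimately show ?thesis by simp
qed

lemma meas_prod:
  assumes fm: "finite_measure M" and "A \<inter> B \<in> sets M" "B \<in> sets M"
  shows "measure M (A \<inter> B) = cprob M A B * measure M B"
proof (cases "measure M B = 0")
  case True
  have "measure M (A \<inter> B) \<le> measure M B"
    using assms by (intro finite_measure.finite_measure_mono) auto
  then show ?thesis using True measure_nonneg[of M "A \<inter> B"] by (simp add: cprob_def)
next
  case False then show ?thesis by (simp add: cprob_def)
qed

lemma group_meas:
  fixes M :: "('u \<times> 'x::finite \<times> bool) measure" and F :: "'x \<Rightarrow> real"
  assumes fm: "finite_measure M" and fC: "finite C" and FC: "range F \<subseteq> C"
    and ms: "\<And>Q. {\<omega>. Q (snd \<omega>)} \<in> sets M"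
  shows "(\<Sum>x\<in>S. measure M {\<omega>. fst (snd \<omega>) = x} * F x)
     = (\<Sum>c\<in>C. c * measure M ({\<omega>. F (fst (snd \<omega>)) = c} \<inter> {\<omega>. fst (snd \<omega>) \<in> S}))"
proof -
  have e: "measure M ({\<omega>. F (fst (snd \<omega>)) = c} \<inter> {\<omega>. fst (snd \<omega>) \<in> S})
     = (\<Sum>x\<in>{x. x \<in> S \<and> F x = c}. measure M {\<omega>. fst (snd \<omega>) = x})" for c
  proof -
    have "({\<omega>::'u \<times> 'x \<times> bool. F (fst (snd \<omega>)) = c} \<inter> {\<omega>. fst (snd \<omega>) \<in> S})
      = {\<omega>. True \<and> fst (snd \<omega>) \<in> {x. x \<in> S \<and> F x = c}}" (is "_ = ?E") by auto
    moreover have "measure M ?E = (\<Sum>x\<in>{x. x \<in> S \<and> F x = c}. measure M {\<omega>. fst (snd \<omega>) = x})"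
      using split_meas[OF fm, of "{x. x \<in> S \<and> F x = c}" "\<lambda>_. True" "\<lambda>\<omega>. fst (snd \<omega>)"] ms by simp
    ultimately show ?thesis by simp
  qed
  have "(\<Sum>c\<in>C. c * measure M ({\<omega>. F (fst (snd \<omega>)) = c} \<inter> {\<omega>. fst (snd \<omega>) \<in> S}))
    = (\<Sum>c\<in>C. (\<Sum>x\<in>{x. x \<in> S \<and> F x = c}. measure M {\<omega>. fst (snd \<omega>) = x} * F x))"
    by (auto simp: e sum_distrib_left mult.commute intro!: sum.cong)
  also have "\<dots> = (\<Sum>x\<in>S. measure M {\<omega>. fst (snd \<omega>) = x} * F x)"
    by (rule sum.group) (use fC FC in auto)
  finally show ?thesis by simp
qed

lemma alg_decomp:
  fixes L A :: "real^'r^'d" and v wD :: "real^'d"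
  assumes "wD = (mat 1 - L ** transpose A) *v v"
  shows "wD + (L ** transpose A) *v v = v"
  using assms by (simp add: matrix_vector_mult_diff_rdistrib)

lemma alg_D:
  fixes L A D :: "real^'r^'d" and v wD :: "real^'d"
  assumes "wD = (mat 1 - L ** transpose A) *v v" "transpose D ** L = 0"
  shows "transpose D *v v = transpose D *v wD"
proof -
  have "transpose D *v wD = transpose D *v v - transpose D *v ((L ** transpose A) *v v)"
    using assms(1) by (simp add: matrix_vector_mult_diff_rdistrib matrix_vector_mult_diff_distrib)
  also have "transpose D *v ((L ** transpose A) *v v) = 0"
    by (simp add: matrix_vector_mul_assoc matrix_mul_assoc assms(2))
  finally show ?thesis by simp
qed

lemma alg_T:
  fixes L A As Bs :: "real^'r^'d" and v wD :: "real^'d"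
  assumes AL: "transpose A ** L = mat 1" and BL: "transpose Bs ** L = mat 1"
    and wd: "wD = (mat 1 - L ** transpose A) *v v"
  shows "transpose Bs *v (wD + (L ** transpose A) *v (transplant L As Bs *v (wD + (L ** transpose A) *v v)))
     = transpose As *v v"
proof -
  define d where "d = (transpose As - transpose Bs) *v v"
  have v: "wD + (L ** transpose A) *v v = v" by (rule alg_decomp[OF wd])
  have T: "transplant L As Bs *v v = v + L *v d"
    by (simp add: transplant_def d_def matrix_vector_mult_add_rdistrib matrix_vector_mul_assoc)
  have P: "(L ** transpose A) *v (v + L *v d) = (L ** transpose A) *v v + L *v d"
  proof -
    have "(L ** transpose A) *v (L *v d) = L *v ((transpose A ** L) *v d)"
      by (simp add: matrix_vector_mul_assoc matrix_mul_assoc)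
    then show ?thesis using AL by (simp add: matrix_vector_right_distrib)
  qed
  have "transpose Bs *v (v + L *v d) = transpose Bs *v v + d"
    by (simp add: matrix_vector_right_distrib matrix_vector_mul_assoc BL)
  also have "\<dots> = transpose As *v v" by (simp add: d_def matrix_vector_mult_diff_rdistrib)
  finally have B: "transpose Bs *v (v + L *v d) = transpose As *v v" .
  have "wD + (L ** transpose A) *v (v + L *v d) = v + L *v d"
    using P v by (simp add: add.assoc[symmetric])
  then show ?thesis using v T B by simp
qed

lemma py_x:
  fixes M :: "('u \<times> 'x \<times> bool) measure" and psi :: "'u \<Rightarrow> 'r::finite"
  assumes fm: "finite_measure M"
    and ms: "\<And>Q. {\<omega>. Q (psi (fst \<omega>)) (snd \<omega>)} \<in> sets M"
    and ab: "measure M {\<omega>. fst (snd \<omega>) = x} > 0 \<Longrightarrow>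
        (\<chi> u. cprob M {\<omega>. psi (fst \<omega>) = u} {\<omega>. fst (snd \<omega>) = x}) = a"
    and de: "measure M {\<omega>. fst (snd \<omega>) = x} > 0 \<Longrightarrow>
        (\<chi> u. cprob M {\<omega>. snd (snd \<omega>)} {\<omega>. fst (snd \<omega>) = x \<and> psi (fst \<omega>) = u}) = b"
  shows "measure M ({\<omega>. snd (snd \<omega>)} \<inter> {\<omega>. fst (snd \<omega>) = x})
     = measure M {\<omega>. fst (snd \<omega>) = x} * (\<Sum>u\<in>UNIV. a $ u * b $ u)"
proof (cases "measure M {\<omega>. fst (snd \<omega>) = x} > 0")
  case False
  have m1: "{\<omega>. fst (snd \<omega>) = x} \<in> sets M" using ms[of "\<lambda>_ z. fst z = x"] by simp
  have "measure M ({\<omega>. snd (snd \<omega>)} \<inter> {\<omega>. fst (snd \<omega>) = x}) \<le> measure M {\<omega>. fst (snd \<omega>) = x}"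
    using m1 by (intro finite_measure.finite_measure_mono[OF fm]) auto
  moreover have n1: "0 \<le> measure M ({\<omega>. snd (snd \<omega>)} \<inter> {\<omega>. fst (snd \<omega>) = x})" by (rule measure_nonneg)
  moreover have n2: "0 \<le> measure M {\<omega>. fst (snd \<omega>) = x}" by (rule measure_nonneg)
  ultimately have z1: "measure M ({\<omega>. snd (snd \<omega>)} \<inter> {\<omega>. fst (snd \<omega>) = x}) = 0"
    and z2: "measure M {\<omega>. fst (snd \<omega>) = x} = 0" using False by linarith+
  show ?thesis by (simp only: z1 z2 mult_zero_left)
next
  case True
  note ab = ab[OF True] and de = de[OF True]
  have av: "cprob M {\<omega>. psi (fst \<omega>) = u} {\<omega>. fst (snd \<omega>) = x} = a $ u" for u
    using arg_cong[OF ab, of "\<lambda>v. v $ u"] by simp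
  have bv: "cprob M {\<omega>. snd (snd \<omega>)} {\<omega>. fst (snd \<omega>) = x \<and> psi (fst \<omega>) = u} = b $ u" for u
    using arg_cong[OF de, of "\<lambda>v. v $ u"] by simp
  have "({\<omega>. snd (snd \<omega>)} \<inter> {\<omega>. fst (snd \<omega>) = x})
     = {\<omega>::'u \<times> 'x \<times> bool. (snd (snd \<omega>) \<and> fst (snd \<omega>) = x) \<and> psi (fst \<omega>) \<in> UNIV}" by auto
  then have "measure M ({\<omega>. snd (snd \<omega>)} \<inter> {\<omega>. fst (snd \<omega>) = x})
     = (\<Sum>u\<in>UNIV. measure M {\<omega>. (snd (snd \<omega>) \<and> fst (snd \<omega>) = x) \<and> psi (fst \<omega>) = u})"
    using split_meas[OF fm, of "UNIV::'r set" "\<lambda>\<omega>. snd (snd \<omega>) \<and> fst (snd \<omega>) = x" "\<lambda>\<omega>. psi (fst \<omega>)"]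
      ms[of "\<lambda>p z. snd z \<and> fst z = x \<and> p = t" for t] by simp
  also have "\<dots> = (\<Sum>u\<in>UNIV. measure M {\<omega>. fst (snd \<omega>) = x} * (a $ u * b $ u))"
  proof (rule sum.cong[OF refl])
    fix u
    have e1: "{\<omega>::'u \<times> 'x \<times> bool. (snd (snd \<omega>) \<and> fst (snd \<omega>) = x) \<and> psi (fst \<omega>) = u}
      = {\<omega>. snd (snd \<omega>)} \<inter> {\<omega>. fst (snd \<omega>) = x \<and> psi (fst \<omega>) = u}" by auto
    have e2: "{\<omega>::'u \<times> 'x \<times> bool. fst (snd \<omega>) = x \<and> psi (fst \<omega>) = u}
      = {\<omega>. psi (fst \<omega>) = u} \<inter> {\<omega>. fst (snd \<omega>) = x}" by auto
    have "measure M ({\<omega>. snd (snd \<omega>)} \<inter> {\<omega>. fst (snd \<omega>) = x \<and> psi (fst \<omega>) = u})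
       = b $ u * measure M {\<omega>. fst (snd \<omega>) = x \<and> psi (fst \<omega>) = u}"
      using meas_prod[OF fm, of "{\<omega>. snd (snd \<omega>)}" "{\<omega>. fst (snd \<omega>) = x \<and> psi (fst \<omega>) = u}"]
        ms[of "\<lambda>p z. snd z \<and> fst z = x \<and> p = u"] ms[of "\<lambda>p z. fst z = x \<and> p = u"] bv
      by (simp add: Int_def conj_commute conj_left_commute)
    also have "measure M {\<omega>. fst (snd \<omega>) = x \<and> psi (fst \<omega>) = u}
       = a $ u * measure M {\<omega>. fst (snd \<omega>) = x}"
      unfolding e2
      using meas_prod[OF fm, of "{\<omega>. psi (fst \<omega>) = u}" "{\<omega>. fst (snd \<omega>) = x}"]
        ms[of "\<lambda>p z. fst z = x \<and> p = u"] ms[of "\<lambda>p z. fst z = x"] av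
      by (simp add: Int_def conj_commute)
    finally show "measure M {\<omega>. (snd (snd \<omega>) \<and> fst (snd \<omega>) = x) \<and> psi (fst \<omega>) = u}
       = measure M {\<omega>. fst (snd \<omega>) = x} * (a $ u * b $ u)"
      unfolding e1 by simp
  qed
  finally show ?thesis by (simp add: sum_distrib_left)
qed

theorem corollary2p2:
  fixes P :: "'k::finite \<Rightarrow> ('u \<times> 'x::finite \<times> bool) measure"
    and MU :: "'u measure"
    and psi :: "'u \<Rightarrow> 'r::finite"
    and phi :: "'x \<Rightarrow> real ^ 'd::finite"
    and As :: "'k \<Rightarrow> real ^ 'r ^ 'd"
    and D L A :: "real ^ 'r ^ 'd"
  assumes prob: "\<And>s. prob_space (P s)"
    and sets_P: "\<And>s. sets (P s) = sets (MU \<Otimes>\<^sub>M (count_space UNIV \<Otimes>\<^sub>M count_space UNIV))"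
    and psi_meas: "psi \<in> measurable MU (count_space UNIV)"
    and abduction: "\<And>s x. measure (P s) {\<omega>. fst (snd \<omega>) = x} > 0 \<Longrightarrow>
        (\<chi> u. cprob (P s) {\<omega>. psi (fst \<omega>) = u} {\<omega>. fst (snd \<omega>) = x})
          = softmax (transpose (As s) *v phi x)"
    and deduction: "\<And>s x. measure (P s) {\<omega>. fst (snd \<omega>) = x} > 0 \<Longrightarrow>
        (\<chi> u. cprob (P s) {\<omega>. snd (snd \<omega>)} {\<omega>. fst (snd \<omega>) = x \<and> psi (fst \<omega>) = u})
          = sigmoid (transpose D *v phi x)"
    and basis_A: "\<And>s. transpose (As s) ** L = mat 1"
    and basis_D: "transpose D ** L = 0"
    and closure: "\<And>s s' w. measure (P s) {\<omega>. phi (fst (snd \<omega>)) = w} > 0 \<longleftrightarrow>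
        measure (P s') {\<omega>. phi (fst (snd \<omega>)) = transplant L (As s) (As s') *v w} > 0"
    and A_basis: "transpose A ** L = mat 1"
    and match: "\<And>s s' wD V.
        measure (P s) {\<omega>. (mat 1 - L ** transpose A) *v phi (fst (snd \<omega>)) = wD} > 0 \<Longrightarrow>
        measure (P s') {\<omega>. (mat 1 - L ** transpose A) *v phi (fst (snd \<omega>)) = wD} > 0 \<Longrightarrow>
        cprob (P s)
          {\<omega>. (L ** transpose A) *v (transplant L (As s) (As s') *v
                 (wD + (L ** transpose A) *v phi (fst (snd \<omega>)))) \<in> V}
          {\<omega>. (mat 1 - L ** transpose A) *v phi (fst (snd \<omega>)) = wD}
        = cprob (P s')
          {\<omega>. (L ** transpose A) *v phi (fst (snd \<omega>)) \<in> V}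
          {\<omega>. (mat 1 - L ** transpose A) *v phi (fst (snd \<omega>)) = wD}"
  shows "\<And>s s' wD y.
        measure (P s) {\<omega>. (mat 1 - L ** transpose A) *v phi (fst (snd \<omega>)) = wD} > 0 \<Longrightarrow>
        measure (P s') {\<omega>. (mat 1 - L ** transpose A) *v phi (fst (snd \<omega>)) = wD} > 0 \<Longrightarrow>
        cprob (P s) {\<omega>. snd (snd \<omega>) = y}
          {\<omega>. (mat 1 - L ** transpose A) *v phi (fst (snd \<omega>)) = wD}
        = cprob (P s') {\<omega>. snd (snd \<omega>) = y}
          {\<omega>. (mat 1 - L ** transpose A) *v phi (fst (snd \<omega>)) = wD}"
proof -
  fix s s' wD y
  assume a1: "measure (P s) {\<omega>. (mat 1 - L ** transpose A) *v phi (fst (snd \<omega>)) = wD} > 0"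
     and a2: "measure (P s') {\<omega>. (mat 1 - L ** transpose A) *v phi (fst (snd \<omega>)) = wD} > 0"
  define PA where "PA = L ** transpose A"
  define S where "S = {x. (mat 1 - PA) *v phi x = wD}"
  define B where "B = {\<omega>::'u \<times> 'x \<times> bool. (mat 1 - L ** transpose A) *v phi (fst (snd \<omega>)) = wD}"
  have BS: "B = {\<omega>. fst (snd \<omega>) \<in> S}" unfolding B_def S_def PA_def by auto
  have fm: "finite_measure (P t)" for t using prob[of t] by (simp add: prob_space_def)
  have spP: "space (P t) = space MU \<times> UNIV" for t
    using sets_eq_imp_space_eq[OF sets_P[of t]] by (simp add: space_pair_measure)
  have spMU: "space MU = UNIV"
  proof -
    have "B \<in> sets (P s)" using a1 measure_notin_sets[of B "P s"] unfolding B_def by force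
    then have Bsp: "B \<subseteq> space (P s)" by (rule sets.sets_into_space)
    have "B \<noteq> {}" using a1 unfolding B_def by force
    then obtain \<omega>0 where w0: "\<omega>0 \<in> B" by blast
    show ?thesis
    proof (intro set_eqI iffI)
      fix u :: 'u
      have "(u, snd \<omega>0) \<in> B" using w0 unfolding B_def by simp
      then show "u \<in> space MU" using Bsp spP[of s] by auto
    qed simp
  qed
  have ms: "{\<omega>. Q (psi (fst \<omega>)) (snd \<omega>)} \<in> sets (P t)" for t :: 'k and Q :: "'r \<Rightarrow> 'x \<times> bool \<Rightarrow> bool"
  proof -
    have m: "(\<lambda>\<omega>. (psi (fst \<omega>), snd \<omega>)) \<in> measurable (MU \<Otimes>\<^sub>M (count_space (UNIV::'x set) \<Otimes>\<^sub>M count_space (UNIV::bool set)))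
        (count_space UNIV \<Otimes>\<^sub>M (count_space UNIV \<Otimes>\<^sub>M count_space UNIV))"
      using psi_meas by measurable
    have c: "(count_space UNIV \<Otimes>\<^sub>M (count_space UNIV \<Otimes>\<^sub>M count_space UNIV)) = (count_space (UNIV :: ('r \<times> 'x \<times> bool) set))"
      by (simp add: pair_measure_countable)
    have m2: "(\<lambda>\<omega>. (psi (fst \<omega>), snd \<omega>)) \<in> measurable (P t) (count_space UNIV)"
      using m unfolding c by (simp add: measurable_cong_sets[OF sets_P refl])
    have "(\<lambda>\<omega>. (psi (fst \<omega>), snd \<omega>)) -` {z. Q (fst z) (snd z)} \<inter> space (P t) \<in> sets (P t)"
      by (rule measurable_sets[OF m2]) simp
    moreover have "(\<lambda>\<omega>. (psi (fst \<omega>), snd \<omega>)) -` {z. Q (fst z) (snd z)} \<inter> space (P t) = {\<omega>. Q (psi (fst \<omega>)) (snd \<omega>)}"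
      using spP[of t] spMU by auto
    ultimately show ?thesis by simp
  qed
  define h where "h t x = (\<Sum>u\<in>UNIV. softmax (transpose (As t) *v phi x) $ u * sigmoid (transpose D *v phi x) $ u)" for t x
  have pyx: "measure (P t) ({\<omega>. snd (snd \<omega>)} \<inter> {\<omega>. fst (snd \<omega>) = x})
     = measure (P t) {\<omega>. fst (snd \<omega>) = x} * h t x" for t x
    unfolding h_def by (rule py_x[OF fm ms abduction deduction])
  have cp: "cprob (P t) {\<omega>. snd (snd \<omega>)} B = (\<Sum>x\<in>S. measure (P t) {\<omega>. fst (snd \<omega>) = x} * h t x) / measure (P t) B" for t
  proof -
    have "{\<omega>. snd (snd \<omega>)} \<inter> B = {\<omega>. snd (snd \<omega>) \<and> fst (snd \<omega>) \<in> S}" unfolding BS by auto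
    moreover have "measure (P t) {\<omega>. snd (snd \<omega>) \<and> fst (snd \<omega>) \<in> S}
       = (\<Sum>x\<in>S. measure (P t) {\<omega>. snd (snd \<omega>) \<and> fst (snd \<omega>) = x})"
      using split_meas[OF fm, of S "\<lambda>\<omega>. snd (snd \<omega>)" "\<lambda>\<omega>. fst (snd \<omega>)"] ms[where t=t and Q="\<lambda>_ z. snd z \<and> fst z = x" for x]
      by simp
    moreover have "measure (P t) {\<omega>. snd (snd \<omega>) \<and> fst (snd \<omega>) = x} = measure (P t) {\<omega>. fst (snd \<omega>) = x} * h t x" for x
      using pyx[of t x] by (simp add: Int_def)
    ultimately show ?thesis unfolding cprob_def by simp
  qed
  define G where "G a = (\<Sum>u\<in>UNIV. softmax (transpose (As s') *v (wD + a)) $ u * sigmoid (transpose D *v wD) $ u)" for a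
  define T where "T = transplant L (As s) (As s')"
  define F where "F x = G (PA *v (T *v (wD + PA *v phi x)))" for x
  define F' where "F' x = G (PA *v phi x)" for x
  have hF: "h s x = F x" if "x \<in> S" for x
  proof -
    have wd: "wD = (mat 1 - L ** transpose A) *v phi x" using that unfolding S_def PA_def by simp
    show ?thesis unfolding h_def F_def G_def T_def PA_def
      using alg_T[OF A_basis basis_A[of s'] wd, where As="As s"] alg_D[OF wd basis_D] by simp
  qed
  have hF': "h s' x = F' x" if "x \<in> S" for x
  proof -
    have wd: "wD = (mat 1 - L ** transpose A) *v phi x" using that unfolding S_def PA_def by simp
    show ?thesis unfolding h_def F'_def G_def PA_def
      using alg_decomp[OF wd] alg_D[OF wd basis_D] by simp
  qed
  define C where "C = range F \<union> range F'"
  have fC: "finite C" unfolding C_def by simp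
  have msnd: "{\<omega>. Q (snd \<omega>)} \<in> sets (P t)" for t Q using ms[where t=t and Q="\<lambda>_ z. Q z"] by simp
  have e1: "cprob (P s) {\<omega>. snd (snd \<omega>)} B = (\<Sum>c\<in>C. c * cprob (P s) {\<omega>. F (fst (snd \<omega>)) = c} B)"
  proof -
    have "(\<Sum>x\<in>S. measure (P s) {\<omega>. fst (snd \<omega>) = x} * h s x) = (\<Sum>x\<in>S. measure (P s) {\<omega>. fst (snd \<omega>) = x} * F x)"
      using hF by simp
    also have "\<dots> = (\<Sum>c\<in>C. c * measure (P s) ({\<omega>. F (fst (snd \<omega>)) = c} \<inter> B))"
      unfolding BS by (rule group_meas[OF fm fC _ msnd]) (auto simp: C_def)
    finally have eq: "(\<Sum>x\<in>S. measure (P s) {\<omega>. fst (snd \<omega>) = x} * h s x) = (\<Sum>c\<in>C. c * measure (P s) ({\<omega>. F (fst (snd \<omega>)) = c} \<inter> B))" .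
    show ?thesis by (subst cp) (simp add: eq cprob_def sum_divide_distrib)
  qed
  have e2: "cprob (P s') {\<omega>. snd (snd \<omega>)} B = (\<Sum>c\<in>C. c * cprob (P s') {\<omega>. F' (fst (snd \<omega>)) = c} B)"
  proof -
    have "(\<Sum>x\<in>S. measure (P s') {\<omega>. fst (snd \<omega>) = x} * h s' x) = (\<Sum>x\<in>S. measure (P s') {\<omega>. fst (snd \<omega>) = x} * F' x)"
      using hF' by simp
    also have "\<dots> = (\<Sum>c\<in>C. c * measure (P s') ({\<omega>. F' (fst (snd \<omega>)) = c} \<inter> B))"
      unfolding BS by (rule group_meas[OF fm fC _ msnd]) (auto simp: C_def)
    finally have eq: "(\<Sum>x\<in>S. measure (P s') {\<omega>. fst (snd \<omega>) = x} * h s' x) = (\<Sum>c\<in>C. c * measure (P s') ({\<omega>. F' (fst (snd \<omega>)) = c} \<inter> B))" .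
    show ?thesis by (subst cp) (simp add: eq cprob_def sum_divide_distrib)
  qed
  have e3: "cprob (P s) {\<omega>. F (fst (snd \<omega>)) = c} B = cprob (P s') {\<omega>. F' (fst (snd \<omega>)) = c} B" for c
    using match[OF a1 a2, of "{a. G a = c}"] unfolding B_def F_def F'_def T_def PA_def by simp
  have main: "cprob (P s) {\<omega>. snd (snd \<omega>)} B = cprob (P s') {\<omega>. snd (snd \<omega>)} B"
    unfolding e1 e2 e3 ..
  have neg: "cprob (P t) {\<omega>. \<not> snd (snd \<omega>)} B = 1 - cprob (P t) {\<omega>. snd (snd \<omega>)} B"
    if "measure (P t) B > 0" for t
  proof -
    have "{\<omega>. \<not> snd (snd \<omega>)} \<inter> B = B - ({\<omega>. snd (snd \<omega>)} \<inter> B)" by auto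
    moreover have "measure (P t) (B - ({\<omega>. snd (snd \<omega>)} \<inter> B)) = measure (P t) B - measure (P t) ({\<omega>. snd (snd \<omega>)} \<inter> B)"
      using msnd[where t=t] unfolding BS
      by (intro finite_measure.finite_measure_Diff[OF fm]) (auto intro: msnd)
    ultimately show ?thesis using that unfolding cprob_def by (simp add: diff_divide_distrib)
  qed
  show "cprob (P s) {\<omega>. snd (snd \<omega>) = y} {\<omega>. (mat 1 - L ** transpose A) *v phi (fst (snd \<omega>)) = wD}
        = cprob (P s') {\<omega>. snd (snd \<omega>) = y} {\<omega>. (mat 1 - L ** transpose A) *v phi (fst (snd \<omega>)) = wD}"
  proof (cases y)
    case True then show ?thesis using main unfolding B_def by simp
  next
    case False then show ?thesis using main neg[of s] neg[of s'] a1 a2 unfolding B_def by simp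
  qed
qed

end
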